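(* Let $B$ be a minimum-weight basis of the weighted uncertainty matroid $\mathcal{M}=(E,\mathcal{I},A,w)$. For $e\in E\setminus B$, let $C_e$ be the fundamental circuit of $e$ with respect to $B$, let $F_e=\{f\in C_e\setminus\{e\}: U_f>L_e\}$ and $\hat F_e=\{f\in C_e\setminus\{e\}: U_f>w_e\}$. A set $Q\subseteq E$ is a certificate of $B$ if and only if for every $e\in E\setminus B$ the following hold: 1. If $w_e\ge U_f$ for all $f\in C_e\setminus\{e\}$, and there exists $f'\in C_e\setminus\{e\}$ with $w_{f'}>L_e$, then $e\in Q$. 2. If $w_e\ge U_f$ for all $f\in C_e\setminus\{e\}$, and $w_f\le L_e$ for all $f\in C_e\setminus\{e\}$, then $e\in Q$ or $F_e\subseteq Q$. 3. If there exists $f\in C_e\setminus\{e\}$ with $w_e<U_f$, and there exists $f'\in C_e\setminus\{e\}$ (possibly $f'=f$) with $w_{f'}>L_e$, then $\hat F_e\cup\{e\}\subseteq Q$. 4. If there exists $f\in C_e\setminus\{e\}$ with $w_e<U_f$, and $w_{f'}\le L_e$ for all $f'\in C_e\setminus\{e\}$, then $F_e\subseteq Q$ or $\hat F_e\cup\{e\}\subseteq Q$.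
   Context: A weighted uncertainty matroid $\mathcal{M}=(E,\mathcal{I},A,w)$ consists of a matroid $M=(E,\mathcal{I})$ on a finite set $E$, for each $e\in E$ a non-empty finite union $A_e$ of bounded real intervals (each open or closed), and a weight $w_e\in A_e$. $L_e=\inf A_e$, $U_e=\sup A_e$. A minimum-weight basis is a basis of $M$ minimizing total weight. A weight assignment is $w^*$ with $w^*_e\in A_e$, consistent with $Q$ if $w^*_e=w_e$ on $Q$. $Q$ is a certificate of (verifies) a basis $B$ if for every weight assignment consistent with $Q$, $B$ is a minimum-weight basis with respect to it. For a basis $B$ and $e\notin B$, the fundamental circuit $C_e$ is the unique circuit contained in $B\cup\{e\}$. *)

theory Defs
  imports Complex_Main
begin

definition matroid :: "'a set \<Rightarrow> ('a set \<Rightarrow> bool) \<Rightarrow> bool" where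
  "matroid E indep \<longleftrightarrow>
     finite E \<and>
     (\<forall>X. indep X \<longrightarrow> X \<subseteq> E) \<and>
     indep {} \<and>
     (\<forall>X Y. indep Y \<and> X \<subseteq> Y \<longrightarrow> indep X) \<and>
     (\<forall>X Y. indep X \<and> indep Y \<and> card X < card Y \<longrightarrow> (\<exists>e\<in>Y - X. indep (insert e X)))"

definition basis :: "'a set \<Rightarrow> ('a set \<Rightarrow> bool) \<Rightarrow> 'a set \<Rightarrow> bool" where
  "basis E indep B \<longleftrightarrow> indep B \<and> (\<forall>X. indep X \<and> B \<subseteq> X \<longrightarrow> X = B)"

definition circuit :: "'a set \<Rightarrow> ('a set \<Rightarrow> bool) \<Rightarrow> 'a set \<Rightarrow> bool" where
  "circuit E indep C \<longleftrightarrow> C \<subseteq> E \<and> \<not> indep C \<and> (\<forall>X. X \<subset> C \<longrightarrow> indep X)"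

text \<open>Fundamental circuit of e (not in B) w.r.t. basis B: the unique circuit in B \<union> {e}.\<close>
definition fund_circuit :: "'a set \<Rightarrow> ('a set \<Rightarrow> bool) \<Rightarrow> 'a set \<Rightarrow> 'a \<Rightarrow> 'a set" where
  "fund_circuit E indep B e = (THE C. circuit E indep C \<and> C \<subseteq> insert e B)"

definition bounded_interval :: "real set \<Rightarrow> bool" where
  "bounded_interval I \<longleftrightarrow>
     (\<exists>a b. I = {a..b} \<or> I = {a<..b} \<or> I = {a..<b} \<or> I = {a<..<b})"

definition uncertainty_area :: "real set \<Rightarrow> bool" where
  "uncertainty_area S \<longleftrightarrow> S \<noteq> {} \<and>
     (\<exists>\<I>. finite \<I> \<and> (\<forall>I\<in>\<I>. bounded_interval I) \<and> S = \<Union>\<I>)"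

definition lower :: "('a \<Rightarrow> real set) \<Rightarrow> 'a \<Rightarrow> real" where
  "lower A e = Inf (A e)"

definition upper :: "('a \<Rightarrow> real set) \<Rightarrow> 'a \<Rightarrow> real" where
  "upper A e = Sup (A e)"

definition weighted_uncertainty_matroid ::
  "'a set \<Rightarrow> ('a set \<Rightarrow> bool) \<Rightarrow> ('a \<Rightarrow> real set) \<Rightarrow> ('a \<Rightarrow> real) \<Rightarrow> bool" where
  "weighted_uncertainty_matroid E indep A w \<longleftrightarrow>
     matroid E indep \<and> (\<forall>e\<in>E. uncertainty_area (A e) \<and> w e \<in> A e)"

definition min_weight_basis ::
  "'a set \<Rightarrow> ('a set \<Rightarrow> bool) \<Rightarrow> ('a \<Rightarrow> real) \<Rightarrow> 'a set \<Rightarrow> bool" where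
  "min_weight_basis E indep w B \<longleftrightarrow>
     basis E indep B \<and> (\<forall>B'. basis E indep B' \<longrightarrow> (\<Sum>e\<in>B. w e) \<le> (\<Sum>e\<in>B'. w e))"

definition weight_assignment :: "'a set \<Rightarrow> ('a \<Rightarrow> real set) \<Rightarrow> ('a \<Rightarrow> real) \<Rightarrow> bool" where
  "weight_assignment E A w' \<longleftrightarrow> (\<forall>e\<in>E. w' e \<in> A e)"

definition consistent_with ::
  "'a set \<Rightarrow> ('a \<Rightarrow> real set) \<Rightarrow> ('a \<Rightarrow> real) \<Rightarrow> 'a set \<Rightarrow> ('a \<Rightarrow> real) \<Rightarrow> bool" where
  "consistent_with E A w Q w' \<longleftrightarrow> weight_assignment E A w' \<and> (\<forall>e\<in>Q. w' e = w e)"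

definition certificate ::
  "'a set \<Rightarrow> ('a set \<Rightarrow> bool) \<Rightarrow> ('a \<Rightarrow> real set) \<Rightarrow> ('a \<Rightarrow> real) \<Rightarrow> 'a set \<Rightarrow> 'a set \<Rightarrow> bool" where
  "certificate E indep A w Q B \<longleftrightarrow>
     (\<forall>w'. consistent_with E A w Q w' \<longrightarrow> min_weight_basis E indep w' B)"

end

theory Submission imports Defs begin

lemma A2:
  assumes "bounded_interval I"
  shows "bdd_above I \<and> bdd_below I"
proof -
  obtain a b where "I = {a..b} \<or> I = {a<..b} \<or> I = {a..<b} \<or> I = {a<..<b}"
      using assms unfolding bounded_interval_def by blast
  then have "I \<subseteq> {a..b}" by (elim disjE) auto
  then show ?thesis by (meson bdd_above_Icc bdd_below_Icc bdd_above_mono bdd_below_mono)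
qed
lemma ua_bdd:
  assumes "uncertainty_area S"
  shows "bdd_above S \<and> bdd_below S \<and> S \<noteq> {}"
proof -
  obtain \<I> where fin: "finite \<I>" and bi: "\<forall>I\<in>\<I>. bounded_interval I" and S: "S = \<Union>\<I>"
    and ne: "S \<noteq> {}"
    using assms unfolding uncertainty_area_def by blast
  have h: "\<forall>I\<in>\<I>. bdd_above I \<and> bdd_below I" using bi by (metis A2)
  have "bdd_above (\<Union>\<I>) \<and> bdd_below (\<Union>\<I>)"
    using fin h by (induction rule: finite_induct) auto
  then show ?thesis using S ne by simp
qed

lemma matroidD:
  assumes "matroid E indep"
  shows "finite E" "indep X \<Longrightarrow> X \<subseteq> E" "indep {}"
    "indep Y \<Longrightarrow> X \<subseteq> Y \<Longrightarrow> indep X"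
    "indep X \<Longrightarrow> indep Y \<Longrightarrow> card X < card Y \<Longrightarrow> \<exists>e\<in>Y - X. indep (insert e X)"
proof -
  note m = assms[unfolded matroid_def]
  show "finite E" using m by (elim conjE)
  show "indep X \<Longrightarrow> X \<subseteq> E" using m by (elim conjE) (erule allE, erule mp)
  show "indep {}" using m by (elim conjE)
  show "indep Y \<Longrightarrow> X \<subseteq> Y \<Longrightarrow> indep X" using m by (elim conjE) (erule allE[of _ X], erule allE[of _ Y], simp)
  show "indep X \<Longrightarrow> indep Y \<Longrightarrow> card X < card Y \<Longrightarrow> \<exists>e\<in>Y - X. indep (insert e X)"
    using m by (elim conjE) (erule allE[of _ X], erule allE[of _ Y], simp)
qed

lemma indep_finite: assumes "matroid E indep" "indep X" shows "finite X"
  using finite_subset[OF matroidD(2)[OF assms] matroidD(1)[OF assms(1)]] .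

lemma augment:
  assumes M: "matroid E indep"
  shows "indep I \<Longrightarrow> indep J \<Longrightarrow> card I \<le> card J \<Longrightarrow>
    \<exists>I'. I \<subseteq> I' \<and> I' \<subseteq> I \<union> J \<and> indep I' \<and> card I' = card J"
proof (induction "card J - card I" arbitrary: I)
  case 0
  then have "card I = card J" by linarith
  then show ?case using 0(2) by (intro exI[of _ I]) simp
next
  case (Suc n)
  then have lt: "card I < card J" by linarith
  have "\<exists>e\<in>J - I. indep (insert e I)" using matroidD(5)[OF M \<open>indep I\<close> \<open>indep J\<close> lt] .
  then obtain x where x: "x \<in> J - I" "indep (insert x I)" by (elim bexE)
  have fI: "finite I" using indep_finite[OF M \<open>indep I\<close>] .
  have cx: "card (insert x I) = Suc (card I)" using fI x by simp
  have h1: "n = card J - card (insert x I)" using Suc.hyps(2) cx by simp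
  have h2: "card (insert x I) \<le> card J" using cx lt by simp
  have "\<exists>I'. insert x I \<subseteq> I' \<and> I' \<subseteq> insert x I \<union> J \<and> indep I' \<and> card I' = card J"
    using Suc.hyps(1)[OF h1 x(2) \<open>indep J\<close> h2] .
  then obtain I' where I': "insert x I \<subseteq> I'" "I' \<subseteq> insert x I \<union> J" "indep I'" "card I' = card J"
    by (elim exE conjE)
  have "I \<subseteq> I'" "I' \<subseteq> I \<union> J" using I' x(1) by auto
  then show ?case using I'(3,4) by (intro exI[of _ I']) simp
qed

lemma basis_indep: "basis E indep B \<Longrightarrow> indep B"
  unfolding basis_def by blast

lemma basis_card_ge:
  assumes M: "matroid E indep" and B: "basis E indep B" and I: "indep I"
  shows "card I \<le> card B"
proof (rule ccontr)
  assume "\<not> card I \<le> card B"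
  then have lt: "card B < card I" by linarith
  have "\<exists>e\<in>I - B. indep (insert e B)" using matroidD(5)[OF M basis_indep[OF B] I lt] .
  then obtain x where x: "x \<in> I - B" "indep (insert x B)" by (elim bexE)
  then have "insert x B = B" using B unfolding basis_def by blast
  then show False using x by blast
qed

lemma basis_card: "matroid E indep \<Longrightarrow> basis E indep B \<Longrightarrow> basis E indep B' \<Longrightarrow> card B = card B'"
  by (meson basis_card_ge basis_indep le_antisym)

lemma basis_of_card:
  assumes M: "matroid E indep" and B: "basis E indep B" and X: "indep X" and c: "card X = card B"
  shows "basis E indep X"
  unfolding basis_def
proof (intro conjI allI impI)
  show "indep X" by fact
  fix Y assume Y: "indep Y \<and> X \<subseteq> Y"
  have fY: "finite Y" using Y indep_finite[OF M] by blast
  have "card Y \<le> card X" using basis_card_ge[OF M B] Y c by simp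
  then have "X = Y" using card_seteq[OF fY] Y by blast
  then show "Y = X" by simp
qed

lemma dep_has_circuit:
  assumes M: "matroid E indep"
  shows "finite S \<Longrightarrow> S \<subseteq> E \<Longrightarrow> \<not> indep S \<Longrightarrow> \<exists>C\<subseteq>S. circuit E indep C"
proof (induction S rule: finite_psubset_induct)
  case (psubset S)
  show ?case
  proof (cases "\<forall>X. X \<subset> S \<longrightarrow> indep X")
    case True
    then show ?thesis using psubset.prems unfolding circuit_def by blast
  next
    case False
    then obtain X where "X \<subset> S" "\<not> indep X" by blast
    then show ?thesis using psubset.IH[of X] psubset.prems by (meson dual_order.trans psubset_imp_subset)
  qed
qed

lemma basis_insert_dep:
  assumes "basis E indep B" "e \<notin> B"
  shows "\<not> indep (insert e B)"
  using assms unfolding basis_def by blast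

lemma extend_in_insert:
  assumes M: "matroid E indep" and B: "basis E indep B" and e: "e \<notin> B"
    and I: "indep I" and sub: "I \<subseteq> insert e B"
  shows "\<exists>I'. I \<subseteq> I' \<and> I' \<subseteq> insert e B \<and> indep I' \<and> card I' = card B"
proof -
  have "card I \<le> card B" using basis_card_ge[OF M B I] .
  then obtain I' where "I \<subseteq> I'" "I' \<subseteq> I \<union> B" "indep I'" "card I' = card B"
    using augment[OF M I basis_indep[OF B]] by blast
  then show ?thesis using sub by blast
qed

lemma circuit_dep: "circuit E indep C \<Longrightarrow> \<not> indep C"
  unfolding circuit_def by blast

lemma circuit_psub: "circuit E indep C \<Longrightarrow> X \<subset> C \<Longrightarrow> indep X"
  unfolding circuit_def by blast

lemma exchange:
  assumes M: "matroid E indep" and B: "basis E indep B" and e: "e \<notin> B"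
    and C: "circuit E indep C" "C \<subseteq> insert e B" and f: "f \<in> C" "f \<noteq> e"
  shows "basis E indep (insert e B - {f})"
proof -
  have "C - {f} \<subset> C" using f by blast
  then have ind: "indep (C - {f})" using circuit_psub[OF C(1)] by blast
  have sub0: "C - {f} \<subseteq> insert e B" using C(2) by blast
  obtain I where I: "C - {f} \<subseteq> I" "I \<subseteq> insert e B" "indep I" "card I = card B"
    using extend_in_insert[OF M B e ind sub0] by blast
  have "f \<notin> I"
  proof
    assume "f \<in> I"
    then have "C \<subseteq> I" using I by blast
    then have "indep C" using matroidD(4)[OF M I(3)] by blast
    then show False using circuit_dep[OF C(1)] by blast
  qed
  then have sub: "I \<subseteq> insert e B - {f}" using I by blast
  have fB: "finite B" using indep_finite[OF M basis_indep[OF B]] .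
  have fin: "finite (insert e B - {f})" using fB by simp
  have "f \<in> B" using f C by blast
  then have "card (insert e B - {f}) = card B" using fB e by (simp add: card_Diff_singleton)
  then have "I = insert e B - {f}" using card_subset_eq[OF fin sub] I by simp
  then show ?thesis using basis_of_card[OF M B] I by simp
qed

lemma circuit_unique:
  assumes M: "matroid E indep" and B: "basis E indep B" and e: "e \<notin> B"
    and C1: "circuit E indep C1" "C1 \<subseteq> insert e B"
    and C2: "circuit E indep C2" "C2 \<subseteq> insert e B"
  shows "C1 = C2"
proof (rule ccontr)
  assume ne: "C1 \<noteq> C2"
  have eC2: "e \<in> C2"
  proof (rule ccontr)
    assume "e \<notin> C2"
    then have "C2 \<subseteq> B" using C2 by blast
    then have "indep C2" using matroidD(4)[OF M basis_indep[OF B]] by blast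
    then show False using circuit_dep[OF C2(1)] by blast
  qed
  have "\<not> C1 \<subseteq> C2"
  proof
    assume "C1 \<subseteq> C2"
    then have "C1 \<subset> C2" using ne by blast
    then show False using circuit_dep[OF C1(1)] circuit_psub[OF C2(1)] by blast
  qed
  then obtain x where x: "x \<in> C1" "x \<notin> C2" by blast
  have "x \<noteq> e" using x eC2 by blast
  then have "basis E indep (insert e B - {x})" using exchange[OF M B e C1 x(1)] by simp
  then have "indep (insert e B - {x})" by (rule basis_indep)
  moreover have "C2 \<subseteq> insert e B - {x}" using C2 x by blast
  ultimately have "indep C2" using matroidD(4)[OF M] by blast
  then show False using circuit_dep[OF C2(1)] by blast
qed

lemma fund_circuit_props:
  assumes M: "matroid E indep" and B: "basis E indep B" and e: "e \<in> E" "e \<notin> B"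
  shows "circuit E indep (fund_circuit E indep B e) \<and> fund_circuit E indep B e \<subseteq> insert e B"
proof -
  have fB: "finite B" using indep_finite[OF M basis_indep[OF B]] .
  have "insert e B \<subseteq> E" using e matroidD(2)[OF M basis_indep[OF B]] by blast
  moreover have "finite (insert e B)" using fB by simp
  ultimately have "\<exists>C\<subseteq>insert e B. circuit E indep C"
    using dep_has_circuit[OF M _ _ basis_insert_dep[OF B e(2)]] by blast
  then obtain C where C: "C \<subseteq> insert e B" "circuit E indep C" by blast
  have "\<exists>!C. circuit E indep C \<and> C \<subseteq> insert e B"
  proof (rule ex1I[of _ C])
    show "circuit E indep C \<and> C \<subseteq> insert e B" using C by simp
    fix C' assume "circuit E indep C' \<and> C' \<subseteq> insert e B"
    then show "C' = C" using circuit_unique[OF M B e(2) _ _ C(2,1)] by blast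
  qed
  then show ?thesis unfolding fund_circuit_def by (rule theI')
qed


lemma cc_imp_min:
  fixes w :: "'a \<Rightarrow> real"
  assumes M: "matroid E indep" and B: "basis E indep B"
    and cc: "\<forall>e\<in>E - B. \<forall>f\<in>fund_circuit E indep B e - {e}. w f \<le> w e"
  shows "basis E indep B' \<Longrightarrow> (\<Sum>e\<in>B. w e) \<le> (\<Sum>e\<in>B'. w e)"
proof (induction "card (B' - B)" arbitrary: B' rule: less_induct)
  case less
  note B' = less.prems
  have fB': "finite B'" using indep_finite[OF M basis_indep[OF B']] .
  show ?case
  proof (cases "B' - B = {}")
    case True
    then have "B' \<subseteq> B" by blast
    then have "B = B'" using B' basis_indep[OF B] unfolding basis_def by blast
    then show ?thesis by simp
  next
    case False
    define m where "m = Min (w ` (B' - B))"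
    have "m \<in> w ` (B' - B)" unfolding m_def using False fB' by (intro Min_in) auto
    then obtain e where e: "e \<in> B' - B" "w e = m" by blast
    have emin: "\<forall>x\<in>B' - B. w e \<le> w x" using e fB' unfolding m_def by auto
    have eE: "e \<in> E" using e matroidD(2)[OF M basis_indep[OF B']] by blast
    let ?C = "fund_circuit E indep B e"
    have C: "circuit E indep ?C" "?C \<subseteq> insert e B"
      using fund_circuit_props[OF M B eE] e by auto
    have "\<not> ?C - {e} \<subseteq> B'"
    proof
      assume "?C - {e} \<subseteq> B'"
      then have "?C \<subseteq> B'" using e by blast
      then have "indep ?C" using matroidD(4)[OF M basis_indep[OF B']] by blast
      then show False using circuit_dep[OF C(1)] by blast
    qed
    then obtain f where f: "f \<in> ?C - {e}" "f \<notin> B'" by blast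
    have wfe: "w f \<le> w e" using cc eE e f by blast
    have fB: "f \<in> B" using f C by blast
    have fE: "f \<in> E" using fB matroidD(2)[OF M basis_indep[OF B]] by blast
    have "insert f B' \<subseteq> E" using fE matroidD(2)[OF M basis_indep[OF B']] by blast
    moreover have "finite (insert f B')" using fB' by simp
    ultimately have "\<exists>C\<subseteq>insert f B'. circuit E indep C"
      using dep_has_circuit[OF M _ _ basis_insert_dep[OF B' f(2)]] by blast
    then obtain C' where C': "C' \<subseteq> insert f B'" "circuit E indep C'" by blast
    have "\<not> C' \<subseteq> B"
    proof
      assume "C' \<subseteq> B"
      then have "indep C'" using matroidD(4)[OF M basis_indep[OF B]] by blast
      then show False using circuit_dep[OF C'(2)] by blast
    qed
    then obtain x where x: "x \<in> C'" "x \<notin> B" by blast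
    have xf: "x \<noteq> f" using x fB by blast
    have xB': "x \<in> B' - B" using x C' xf by blast
    define B'' where "B'' = insert f B' - {x}"
    have B'': "basis E indep B''" unfolding B''_def using exchange[OF M B' f(2) C'(2,1) x(1) xf] .
    have "B'' - B = (B' - B) - {x}" unfolding B''_def using fB by blast
    moreover have "card ((B' - B) - {x}) < card (B' - B)" using xB' fB' by (intro card_Diff1_less) auto
    ultimately have "card (B'' - B) < card (B' - B)" by simp
    then have IH: "(\<Sum>e\<in>B. w e) \<le> (\<Sum>e\<in>B''. w e)" using less.hyps B'' by blast
    have "B'' = insert f (B' - {x})" unfolding B''_def using xf by blast
    then have "(\<Sum>e\<in>B''. w e) = w f + (\<Sum>e\<in>B' - {x}. w e)" using fB' f by simp
    also have "(\<Sum>e\<in>B' - {x}. w e) = (\<Sum>e\<in>B'. w e) - w x"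
      using xB' fB' by (simp add: sum_diff1)
    finally have "(\<Sum>e\<in>B''. w e) \<le> (\<Sum>e\<in>B'. w e)" using wfe emin xB' by force
    then show ?thesis using IH by linarith
  qed
qed

lemma min_iff_cc:
  fixes w :: "'a \<Rightarrow> real"
  assumes M: "matroid E indep" and B: "basis E indep B"
  shows "min_weight_basis E indep w B \<longleftrightarrow>
    (\<forall>e\<in>E - B. \<forall>f\<in>fund_circuit E indep B e - {e}. w f \<le> w e)"
proof
  assume cc: "\<forall>e\<in>E - B. \<forall>f\<in>fund_circuit E indep B e - {e}. w f \<le> w e"
  show "min_weight_basis E indep w B" unfolding min_weight_basis_def
    using B cc_imp_min[OF M B cc] by blast
next
  assume mw: "min_weight_basis E indep w B"
  show "\<forall>e\<in>E - B. \<forall>f\<in>fund_circuit E indep B e - {e}. w f \<le> w e"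
  proof (intro ballI, rule ccontr)
    fix e f assume e: "e \<in> E - B" and f: "f \<in> fund_circuit E indep B e - {e}" and nle: "\<not> w f \<le> w e"
    let ?C = "fund_circuit E indep B e"
    have C: "circuit E indep ?C" "?C \<subseteq> insert e B"
      using fund_circuit_props[OF M B] e by auto
    have B'': "basis E indep (insert e B - {f})" using exchange[OF M B _ C] e f by blast
    have fB: "f \<in> B" using f C by blast
    have fin: "finite B" using indep_finite[OF M basis_indep[OF B]] .
    have "insert e B - {f} = insert e (B - {f})" using f by blast
    then have "(\<Sum>x\<in>insert e B - {f}. w x) = w e + ((\<Sum>x\<in>B. w x) - w f)"
      using fin e fB by (simp add: sum_diff1)
    moreover have "(\<Sum>x\<in>B. w x) \<le> (\<Sum>x\<in>insert e B - {f}. w x)"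
      using mw B'' unfolding min_weight_basis_def by blast
    ultimately show False using nle by linarith
  qed
qed


definition pairok :: "'a set \<Rightarrow> ('a \<Rightarrow> real set) \<Rightarrow> ('a \<Rightarrow> real) \<Rightarrow> 'a \<Rightarrow> 'a \<Rightarrow> bool" where
  "pairok Q A w e f \<longleftrightarrow>
     (e \<in> Q \<and> f \<in> Q \<longrightarrow> w f \<le> w e) \<and> (e \<in> Q \<and> f \<notin> Q \<longrightarrow> upper A f \<le> w e) \<and>
     (e \<notin> Q \<and> f \<in> Q \<longrightarrow> w f \<le> lower A e) \<and> (e \<notin> Q \<and> f \<notin> Q \<longrightarrow> upper A f \<le> lower A e)"

lemma pair_char:
  fixes w :: "'a \<Rightarrow> real"
  assumes WA: "\<forall>x\<in>E. A x \<noteq> {} \<and> bdd_above (A x) \<and> bdd_below (A x) \<and> w x \<in> A x"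
    and e: "e \<in> E" and f: "f \<in> E" and ef: "e \<noteq> f"
  shows "(\<forall>w'. consistent_with E A w Q w' \<longrightarrow> w' f \<le> w' e) \<longleftrightarrow> pairok Q A w e f"
proof
  have Ae: "A e \<noteq> {}" "bdd_above (A e)" "bdd_below (A e)" "w e \<in> A e" using WA e by auto
  have Af: "A f \<noteq> {}" "bdd_above (A f)" "bdd_below (A f)" "w f \<in> A f" using WA f by auto
  assume H: "\<forall>w'. consistent_with E A w Q w' \<longrightarrow> w' f \<le> w' e"
  have wc: "consistent_with E A w Q w" using WA unfolding consistent_with_def weight_assignment_def by blast
  have c1: "e \<in> Q \<and> f \<in> Q \<longrightarrow> w f \<le> w e" using H wc by blast
  have c2: "e \<in> Q \<and> f \<notin> Q \<longrightarrow> upper A f \<le> w e"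
  proof (intro impI, rule ccontr)
    assume a: "e \<in> Q \<and> f \<notin> Q" and "\<not> upper A f \<le> w e"
    then have "w e < Sup (A f)" unfolding upper_def by simp
    then obtain x where x: "x \<in> A f" "w e < x" using less_cSup_iff[OF Af(1,2)] by blast
    have "consistent_with E A w Q (w(f := x))"
      using WA x a unfolding consistent_with_def weight_assignment_def by auto
    then have "(w(f := x)) f \<le> (w(f := x)) e" using H by blast
    then show False using x ef by simp
  qed
  have c3: "e \<notin> Q \<and> f \<in> Q \<longrightarrow> w f \<le> lower A e"
  proof (intro impI, rule ccontr)
    assume a: "e \<notin> Q \<and> f \<in> Q" and "\<not> w f \<le> lower A e"
    then have "Inf (A e) < w f" unfolding lower_def by simp
    then obtain y where y: "y \<in> A e" "y < w f" using cInf_less_iff[OF Ae(1,3)] by blast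
    have "consistent_with E A w Q (w(e := y))"
      using WA y a unfolding consistent_with_def weight_assignment_def by auto
    then have "(w(e := y)) f \<le> (w(e := y)) e" using H by blast
    then show False using y ef by simp
  qed
  have c4: "e \<notin> Q \<and> f \<notin> Q \<longrightarrow> upper A f \<le> lower A e"
  proof (intro impI, rule ccontr)
    assume a: "e \<notin> Q \<and> f \<notin> Q" and "\<not> upper A f \<le> lower A e"
    then have "Inf (A e) < Sup (A f)" unfolding lower_def upper_def by simp
    then obtain x where x: "x \<in> A f" "Inf (A e) < x" using less_cSup_iff[OF Af(1,2)] by blast
    then obtain y where y: "y \<in> A e" "y < x" using cInf_less_iff[OF Ae(1,3)] by blast
    have "consistent_with E A w Q (w(e := y, f := x))"
      using WA x y a unfolding consistent_with_def weight_assignment_def by auto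
    then have "(w(e := y, f := x)) f \<le> (w(e := y, f := x)) e" using H by blast
    then show False using x y ef by simp
  qed
  show "pairok Q A w e f" unfolding pairok_def using c1 c2 c3 c4 by blast
next
  have Ae: "A e \<noteq> {}" "bdd_above (A e)" "bdd_below (A e)" "w e \<in> A e" using WA e by auto
  have Af: "A f \<noteq> {}" "bdd_above (A f)" "bdd_below (A f)" "w f \<in> A f" using WA f by auto
  assume P: "pairok Q A w e f"
  show "\<forall>w'. consistent_with E A w Q w' \<longrightarrow> w' f \<le> w' e"
  proof (intro allI impI)
    fix w' assume c: "consistent_with E A w Q w'"
    have we: "w' e \<in> A e" "w' f \<in> A f" using c e f unfolding consistent_with_def weight_assignment_def by auto
    have "lower A e \<le> w' e" unfolding lower_def using cInf_lower[OF we(1) Ae(3)] .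
    moreover have "w' f \<le> upper A f" unfolding upper_def using cSup_upper[OF we(2) Af(2)] .
    moreover have "e \<in> Q \<Longrightarrow> w' e = w e" "f \<in> Q \<Longrightarrow> w' f = w f"
      using c unfolding consistent_with_def by auto
    ultimately show "w' f \<le> w' e" using P unfolding pairok_def
      by (cases "e \<in> Q"; cases "f \<in> Q") auto
  qed
qed

lemma step3:
  fixes w :: "'a \<Rightarrow> real"
  assumes b1: "\<forall>f\<in>C. w f \<le> upper A f" and b2: "lower A e \<le> w e" and b3: "\<forall>f\<in>C. w f \<le> w e"
  shows "(\<forall>f\<in>C. pairok Q A w e f) \<longleftrightarrow>
       (let L = lower A; U = upper A;
           F = {f\<in>C. U f > L e};
           Fh = {f\<in>C. U f > w e}
       in ((\<forall>f\<in>C. w e \<ge> U f) \<and> (\<exists>f'\<in>C. w f' > L e) \<longrightarrow> e \<in> Q) \<and>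
          ((\<forall>f\<in>C. w e \<ge> U f) \<and> (\<forall>f\<in>C. w f \<le> L e) \<longrightarrow> e \<in> Q \<or> F \<subseteq> Q) \<and>
          ((\<exists>f\<in>C. w e < U f) \<and> (\<exists>f'\<in>C. w f' > L e) \<longrightarrow> Fh \<union> {e} \<subseteq> Q) \<and>
          ((\<exists>f\<in>C. w e < U f) \<and> (\<forall>f'\<in>C. w f' \<le> L e) \<longrightarrow> F \<subseteq> Q \<or> Fh \<union> {e} \<subseteq> Q))"
proof -
  define L where "L = lower A"
  define U where "U = upper A"
  define F where "F = {f\<in>C. U f > L e}"
  define Fh where "Fh = {f\<in>C. U f > w e}"
  have b1': "\<forall>f\<in>C. w f \<le> U f" using b1 unfolding U_def .
  have b2': "L e \<le> w e" using b2 unfolding L_def .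
  have FhF: "Fh \<subseteq> F" unfolding F_def Fh_def using b2' by auto
  have R: "?thesis \<longleftrightarrow> ((\<forall>f\<in>C. pairok Q A w e f) \<longleftrightarrow>
         ((\<forall>f\<in>C. w e \<ge> U f) \<and> (\<exists>f'\<in>C. w f' > L e) \<longrightarrow> e \<in> Q) \<and>
          ((\<forall>f\<in>C. w e \<ge> U f) \<and> (\<forall>f\<in>C. w f \<le> L e) \<longrightarrow> e \<in> Q \<or> F \<subseteq> Q) \<and>
          ((\<exists>f\<in>C. w e < U f) \<and> (\<exists>f'\<in>C. w f' > L e) \<longrightarrow> Fh \<union> {e} \<subseteq> Q) \<and>
          ((\<exists>f\<in>C. w e < U f) \<and> (\<forall>f'\<in>C. w f' \<le> L e) \<longrightarrow> F \<subseteq> Q \<or> Fh \<union> {e} \<subseteq> Q))"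
    unfolding L_def U_def F_def Fh_def Let_def by (rule refl)
  have Fh_empty: "(\<forall>f\<in>C. w e \<ge> U f) \<longleftrightarrow> Fh = {}" unfolding Fh_def by force
  have Fh_ne: "(\<exists>f\<in>C. w e < U f) \<longleftrightarrow> Fh \<noteq> {}" unfolding Fh_def by force
  have Pc: "pairok Q A w e f \<longleftrightarrow>
     (e \<in> Q \<and> f \<in> Q \<longrightarrow> w f \<le> w e) \<and> (e \<in> Q \<and> f \<notin> Q \<longrightarrow> U f \<le> w e) \<and>
     (e \<notin> Q \<and> f \<in> Q \<longrightarrow> w f \<le> L e) \<and> (e \<notin> Q \<and> f \<notin> Q \<longrightarrow> U f \<le> L e)" for f
    unfolding pairok_def L_def U_def by (rule refl)
  show ?thesis
  proof (cases "e \<in> Q")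
    case True
    have l: "(\<forall>f\<in>C. pairok Q A w e f) \<longleftrightarrow> Fh \<subseteq> Q"
    proof
      assume H: "\<forall>f\<in>C. pairok Q A w e f"
      show "Fh \<subseteq> Q"
      proof
        fix f assume f: "f \<in> Fh"
        then have "f \<in> C" "\<not> U f \<le> w e" unfolding Fh_def by auto
        then show "f \<in> Q" using H True Pc by blast
      qed
    next
      assume H: "Fh \<subseteq> Q"
      show "\<forall>f\<in>C. pairok Q A w e f"
      proof
        fix f assume f: "f \<in> C"
        have "f \<notin> Q \<Longrightarrow> U f \<le> w e" using H f unfolding Fh_def by force
        then show "pairok Q A w e f" using Pc True b3 f by auto
      qed
    qed
    have r: "((\<forall>f\<in>C. w e \<ge> U f) \<and> (\<exists>f'\<in>C. w f' > L e) \<longrightarrow> e \<in> Q) \<and>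
          ((\<forall>f\<in>C. w e \<ge> U f) \<and> (\<forall>f\<in>C. w f \<le> L e) \<longrightarrow> e \<in> Q \<or> F \<subseteq> Q) \<and>
          ((\<exists>f\<in>C. w e < U f) \<and> (\<exists>f'\<in>C. w f' > L e) \<longrightarrow> Fh \<union> {e} \<subseteq> Q) \<and>
          ((\<exists>f\<in>C. w e < U f) \<and> (\<forall>f'\<in>C. w f' \<le> L e) \<longrightarrow> F \<subseteq> Q \<or> Fh \<union> {e} \<subseteq> Q)
       \<longleftrightarrow> Fh \<subseteq> Q"
    proof
      assume "Fh \<subseteq> Q" then show "((\<forall>f\<in>C. w e \<ge> U f) \<and> (\<exists>f'\<in>C. w f' > L e) \<longrightarrow> e \<in> Q) \<and>
          ((\<forall>f\<in>C. w e \<ge> U f) \<and> (\<forall>f\<in>C. w f \<le> L e) \<longrightarrow> e \<in> Q \<or> F \<subseteq> Q) \<and>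
          ((\<exists>f\<in>C. w e < U f) \<and> (\<exists>f'\<in>C. w f' > L e) \<longrightarrow> Fh \<union> {e} \<subseteq> Q) \<and>
          ((\<exists>f\<in>C. w e < U f) \<and> (\<forall>f'\<in>C. w f' \<le> L e) \<longrightarrow> F \<subseteq> Q \<or> Fh \<union> {e} \<subseteq> Q)"
        using True by blast
    next
      assume H: "((\<forall>f\<in>C. w e \<ge> U f) \<and> (\<exists>f'\<in>C. w f' > L e) \<longrightarrow> e \<in> Q) \<and>
          ((\<forall>f\<in>C. w e \<ge> U f) \<and> (\<forall>f\<in>C. w f \<le> L e) \<longrightarrow> e \<in> Q \<or> F \<subseteq> Q) \<and>
          ((\<exists>f\<in>C. w e < U f) \<and> (\<exists>f'\<in>C. w f' > L e) \<longrightarrow> Fh \<union> {e} \<subseteq> Q) \<and>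
          ((\<exists>f\<in>C. w e < U f) \<and> (\<forall>f'\<in>C. w f' \<le> L e) \<longrightarrow> F \<subseteq> Q \<or> Fh \<union> {e} \<subseteq> Q)"
      show "Fh \<subseteq> Q"
      proof (cases "Fh = {}")
        case True then show ?thesis by simp
      next
        case False
        then have ne: "\<exists>f\<in>C. w e < U f" using Fh_ne by simp
        show ?thesis
        proof (cases "\<exists>f'\<in>C. w f' > L e")
          case True then show ?thesis using H ne by blast
        next
          case False
          then have "\<forall>f'\<in>C. w f' \<le> L e" by (simp add: not_less)
          then have "F \<subseteq> Q \<or> Fh \<union> {e} \<subseteq> Q" using H ne by blast
          then show ?thesis using FhF by blast
        qed
      qed
    qed
    have G: "(\<forall>f\<in>C. pairok Q A w e f) \<longleftrightarrow> ((\<forall>f\<in>C. w e \<ge> U f) \<and> (\<exists>f'\<in>C. w f' > L e) \<longrightarrow> e \<in> Q) \<and>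
          ((\<forall>f\<in>C. w e \<ge> U f) \<and> (\<forall>f\<in>C. w f \<le> L e) \<longrightarrow> e \<in> Q \<or> F \<subseteq> Q) \<and>
          ((\<exists>f\<in>C. w e < U f) \<and> (\<exists>f'\<in>C. w f' > L e) \<longrightarrow> Fh \<union> {e} \<subseteq> Q) \<and>
          ((\<exists>f\<in>C. w e < U f) \<and> (\<forall>f'\<in>C. w f' \<le> L e) \<longrightarrow> F \<subseteq> Q \<or> Fh \<union> {e} \<subseteq> Q)"
      by (simp only: l r)
    show ?thesis using iffD2[OF R G] .
  next
    case False
    have l: "(\<forall>f\<in>C. pairok Q A w e f) \<longleftrightarrow> (\<forall>f\<in>C. w f \<le> L e) \<and> F \<subseteq> Q"
    proof
      assume H: "\<forall>f\<in>C. pairok Q A w e f"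
      have h1: "\<forall>f\<in>C. w f \<le> L e"
      proof
        fix f assume f: "f \<in> C"
        show "w f \<le> L e"
        proof (cases "f \<in> Q")
          case True then show ?thesis using H f False Pc by blast
        next
          case fQ: False
          then have "U f \<le> L e" using H f False Pc by blast
          then show ?thesis using b1' f by force
        qed
      qed
      have h2: "F \<subseteq> Q"
      proof
        fix f assume f: "f \<in> F"
        then have "f \<in> C" "\<not> U f \<le> L e" unfolding F_def by auto
        then show "f \<in> Q" using H False Pc by blast
      qed
      show "(\<forall>f\<in>C. w f \<le> L e) \<and> F \<subseteq> Q" using h1 h2 by blast
    next
      assume H: "(\<forall>f\<in>C. w f \<le> L e) \<and> F \<subseteq> Q"
      show "\<forall>f\<in>C. pairok Q A w e f"
      proof
        fix f assume f: "f \<in> C"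
        have "f \<notin> Q \<Longrightarrow> U f \<le> L e" using H f unfolding F_def by force
        then show "pairok Q A w e f" using Pc False H f by auto
      qed
    qed
    have r: "((\<forall>f\<in>C. w e \<ge> U f) \<and> (\<exists>f'\<in>C. w f' > L e) \<longrightarrow> e \<in> Q) \<and>
          ((\<forall>f\<in>C. w e \<ge> U f) \<and> (\<forall>f\<in>C. w f \<le> L e) \<longrightarrow> e \<in> Q \<or> F \<subseteq> Q) \<and>
          ((\<exists>f\<in>C. w e < U f) \<and> (\<exists>f'\<in>C. w f' > L e) \<longrightarrow> Fh \<union> {e} \<subseteq> Q) \<and>
          ((\<exists>f\<in>C. w e < U f) \<and> (\<forall>f'\<in>C. w f' \<le> L e) \<longrightarrow> F \<subseteq> Q \<or> Fh \<union> {e} \<subseteq> Q)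
       \<longleftrightarrow> (\<forall>f\<in>C. w f \<le> L e) \<and> F \<subseteq> Q"
    proof -
      have "(\<exists>f'\<in>C. w f' > L e) \<longleftrightarrow> \<not> (\<forall>f\<in>C. w f \<le> L e)" by (auto simp: not_le)
      moreover have "(\<exists>f\<in>C. w e < U f) \<longleftrightarrow> \<not> (\<forall>f\<in>C. w e \<ge> U f)" by (auto simp: not_le)
      moreover have "\<not> Fh \<union> {e} \<subseteq> Q" using False by blast
      ultimately show ?thesis using False by blast
    qed
    have G: "(\<forall>f\<in>C. pairok Q A w e f) \<longleftrightarrow> ((\<forall>f\<in>C. w e \<ge> U f) \<and> (\<exists>f'\<in>C. w f' > L e) \<longrightarrow> e \<in> Q) \<and>
          ((\<forall>f\<in>C. w e \<ge> U f) \<and> (\<forall>f\<in>C. w f \<le> L e) \<longrightarrow> e \<in> Q \<or> F \<subseteq> Q) \<and>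
          ((\<exists>f\<in>C. w e < U f) \<and> (\<exists>f'\<in>C. w f' > L e) \<longrightarrow> Fh \<union> {e} \<subseteq> Q) \<and>
          ((\<exists>f\<in>C. w e < U f) \<and> (\<forall>f'\<in>C. w f' \<le> L e) \<longrightarrow> F \<subseteq> Q \<or> Fh \<union> {e} \<subseteq> Q)"
      by (simp only: l r)
    show ?thesis using iffD2[OF R G] .
  qed
qed

theorem lemma25:
  fixes E :: "'a set" and indep :: "'a set \<Rightarrow> bool"
    and A :: "'a \<Rightarrow> real set" and w :: "'a \<Rightarrow> real" and B Q :: "'a set"
  assumes "weighted_uncertainty_matroid E indep A w"
    and "min_weight_basis E indep w B"
    and "Q \<subseteq> E"
  shows "certificate E indep A w Q B \<longleftrightarrow>
    (\<forall>e\<in>E - B.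
       let C = fund_circuit E indep B e - {e};
           L = lower A; U = upper A;
           F = {f\<in>C. U f > L e};
           Fh = {f\<in>C. U f > w e}
       in ((\<forall>f\<in>C. w e \<ge> U f) \<and> (\<exists>f'\<in>C. w f' > L e) \<longrightarrow> e \<in> Q) \<and>
          ((\<forall>f\<in>C. w e \<ge> U f) \<and> (\<forall>f\<in>C. w f \<le> L e) \<longrightarrow> e \<in> Q \<or> F \<subseteq> Q) \<and>
          ((\<exists>f\<in>C. w e < U f) \<and> (\<exists>f'\<in>C. w f' > L e) \<longrightarrow> Fh \<union> {e} \<subseteq> Q) \<and>
          ((\<exists>f\<in>C. w e < U f) \<and> (\<forall>f'\<in>C. w f' \<le> L e) \<longrightarrow> F \<subseteq> Q \<or> Fh \<union> {e} \<subseteq> Q))"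
proof -
  have M: "matroid E indep" using assms(1) unfolding weighted_uncertainty_matroid_def by blast
  have WA: "\<forall>x\<in>E. A x \<noteq> {} \<and> bdd_above (A x) \<and> bdd_below (A x) \<and> w x \<in> A x"
  proof
    fix x assume x: "x \<in> E"
    then have "uncertainty_area (A x)" "w x \<in> A x"
      using assms(1) unfolding weighted_uncertainty_matroid_def by auto
    then have u: "bdd_above (A x) \<and> bdd_below (A x) \<and> A x \<noteq> {}" "w x \<in> A x" using ua_bdd by auto
    then show "A x \<noteq> {} \<and> bdd_above (A x) \<and> bdd_below (A x) \<and> w x \<in> A x" by simp
  qed
  have Bb: "basis E indep B" using assms(2) unfolding min_weight_basis_def by blast
  have BE: "B \<subseteq> E" using matroidD(2)[OF M basis_indep[OF Bb]] .
  have mincc: "\<forall>e\<in>E - B. \<forall>f\<in>fund_circuit E indep B e - {e}. w f \<le> w e"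
    using min_iff_cc[OF M Bb] assms(2) by blast
  have CE: "fund_circuit E indep B e - {e} \<subseteq> E" if "e \<in> E - B" for e
    using fund_circuit_props[OF M Bb] that BE by blast
  have step1: "certificate E indep A w Q B \<longleftrightarrow>
      (\<forall>e\<in>E - B. \<forall>f\<in>fund_circuit E indep B e - {e}.
         (\<forall>w'. consistent_with E A w Q w' \<longrightarrow> w' f \<le> w' e))"
  proof -
    have "certificate E indep A w Q B \<longleftrightarrow> (\<forall>w'. consistent_with E A w Q w' \<longrightarrow>
        (\<forall>e\<in>E - B. \<forall>f\<in>fund_circuit E indep B e - {e}. w' f \<le> w' e))"
      unfolding certificate_def using min_iff_cc[OF M Bb] by presburger
    also have "\<dots> \<longleftrightarrow> (\<forall>e\<in>E - B. \<forall>f\<in>fund_circuit E indep B e - {e}.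
         (\<forall>w'. consistent_with E A w Q w' \<longrightarrow> w' f \<le> w' e))"
    proof
      assume H: "\<forall>w'. consistent_with E A w Q w' \<longrightarrow>
        (\<forall>e\<in>E - B. \<forall>f\<in>fund_circuit E indep B e - {e}. w' f \<le> w' e)"
      show "\<forall>e\<in>E - B. \<forall>f\<in>fund_circuit E indep B e - {e}.
         (\<forall>w'. consistent_with E A w Q w' \<longrightarrow> w' f \<le> w' e)"
      proof (intro ballI allI impI)
        fix e f w' assume "e \<in> E - B" "f \<in> fund_circuit E indep B e - {e}" "consistent_with E A w Q w'"
        then show "w' f \<le> w' e" using H by blast
      qed
    next
      assume H: "\<forall>e\<in>E - B. \<forall>f\<in>fund_circuit E indep B e - {e}.
         (\<forall>w'. consistent_with E A w Q w' \<longrightarrow> w' f \<le> w' e)"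
      show "\<forall>w'. consistent_with E A w Q w' \<longrightarrow>
        (\<forall>e\<in>E - B. \<forall>f\<in>fund_circuit E indep B e - {e}. w' f \<le> w' e)"
      proof (intro ballI allI impI)
        fix e f w' assume "e \<in> E - B" "f \<in> fund_circuit E indep B e - {e}" "consistent_with E A w Q w'"
        then show "w' f \<le> w' e" using H by blast
      qed
    qed
    finally show ?thesis .
  qed
  have step2: "(\<forall>w'. consistent_with E A w Q w' \<longrightarrow> w' f \<le> w' e) \<longleftrightarrow> pairok Q A w e f"
    if "e \<in> E - B" "f \<in> fund_circuit E indep B e - {e}" for e f
  proof (rule pair_char[OF WA])
    show "e \<in> E" using that by blast
    show "f \<in> E" using that CE by blast
    show "e \<noteq> f" using that by blast
  qed
  have step3': "(\<forall>f\<in>fund_circuit E indep B e - {e}. pairok Q A w e f) \<longleftrightarrow>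
       (let C = fund_circuit E indep B e - {e};
           L = lower A; U = upper A;
           F = {f\<in>C. U f > L e};
           Fh = {f\<in>C. U f > w e}
       in ((\<forall>f\<in>C. w e \<ge> U f) \<and> (\<exists>f'\<in>C. w f' > L e) \<longrightarrow> e \<in> Q) \<and>
          ((\<forall>f\<in>C. w e \<ge> U f) \<and> (\<forall>f\<in>C. w f \<le> L e) \<longrightarrow> e \<in> Q \<or> F \<subseteq> Q) \<and>
          ((\<exists>f\<in>C. w e < U f) \<and> (\<exists>f'\<in>C. w f' > L e) \<longrightarrow> Fh \<union> {e} \<subseteq> Q) \<and>
          ((\<exists>f\<in>C. w e < U f) \<and> (\<forall>f'\<in>C. w f' \<le> L e) \<longrightarrow> F \<subseteq> Q \<or> Fh \<union> {e} \<subseteq> Q))"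
    if e: "e \<in> E - B" for e
  proof -
    let ?C = "fund_circuit E indep B e - {e}"
    have b1: "\<forall>f\<in>?C. w f \<le> upper A f"
    proof
      fix f assume "f \<in> ?C"
      then have "f \<in> E" using CE e by blast
      then show "w f \<le> upper A f" unfolding upper_def using WA cSup_upper by blast
    qed
    have b2: "lower A e \<le> w e" unfolding lower_def using WA e cInf_lower by blast
    have b3: "\<forall>f\<in>?C. w f \<le> w e" using mincc e by blast
    show ?thesis unfolding Let_def[of ?C] using step3[OF b1 b2 b3] .
  qed
  have step4: "(\<forall>f\<in>fund_circuit E indep B e - {e}. \<forall>w'. consistent_with E A w Q w' \<longrightarrow> w' f \<le> w' e)
      \<longleftrightarrow> (\<forall>f\<in>fund_circuit E indep B e - {e}. pairok Q A w e f)" if e: "e \<in> E - B" for e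
    using step2[OF e] by (rule ball_cong[OF refl])
  show ?thesis
    unfolding step1
  proof (rule ball_cong[OF refl])
    fix e assume e: "e \<in> E - B"
    show "(\<forall>f\<in>fund_circuit E indep B e - {e}. \<forall>w'. consistent_with E A w Q w' \<longrightarrow> w' f \<le> w' e) =
       (let C = fund_circuit E indep B e - {e};
           L = lower A; U = upper A;
           F = {f\<in>C. U f > L e};
           Fh = {f\<in>C. U f > w e}
       in ((\<forall>f\<in>C. w e \<ge> U f) \<and> (\<exists>f'\<in>C. w f' > L e) \<longrightarrow> e \<in> Q) \<and>
          ((\<forall>f\<in>C. w e \<ge> U f) \<and> (\<forall>f\<in>C. w f \<le> L e) \<longrightarrow> e \<in> Q \<or> F \<subseteq> Q) \<and>
          ((\<exists>f\<in>C. w e < U f) \<and> (\<exists>f'\<in>C. w f' > L e) \<longrightarrow> Fh \<union> {e} \<subseteq> Q) \<and>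
          ((\<exists>f\<in>C. w e < U f) \<and> (\<forall>f'\<in>C. w f' \<le> L e) \<longrightarrow> F \<subseteq> Q \<or> Fh \<union> {e} \<subseteq> Q))"
      using trans[OF step4[OF e] step3'[OF e]] .
  qed
qed

end
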